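(* Let $(u^k)$ be the iteration sequence defined by Algorithm 2 below, and suppose that at step $k$ one has $\delta^k>0$. Then $\lambda(u^{k+1})>\lambda(u^k)$.
   Context: $T,G:\mathbb{R}^n\to\mathbb{R}^n$ are continuously differentiable; $S\subset\mathbb{R}^n$ is open with $\langle G(u),\psi\rangle>0$ for all $u\in S$ and all nonzero $\psi$ with nonnegative entries. For $u\in S$: $f_i(u)=T_i(u)/G_i(u)$, $\lambda(u)=\min_i f_i(u)$, $N_\varepsilon(u)=\{i: f_i(u)-\lambda(u)<\varepsilon\}$. For $M=\{i_1<\dots<i_m\}$, $\mathcal{A}_M(u)$ is the $n\times m$ matrix with columns $\nabla f_{i_1}(u),\dots,\nabla f_{i_m}(u)$ and $\Gamma_M(u)=\mathcal{A}_M(u)^T\mathcal{A}_M(u)$. Algorithm 2 (parameters $\varepsilon,\delta>0$, start $u_0\in S$): for $k=0,1,2,\dots$: compute $\lambda(u^k)$ and $N_\varepsilon(u^k)=\{i_1<\dots<i_N\}$; solve the linear system $\Gamma_{N_\varepsilon(u^k)}(u^k)\alpha^k=\delta^k(1,\dots,1)^T$, $\sum_{j=1}^N\alpha^k_j=1$ for $(\alpha^k,\delta^k)\in\mathbb{R}^N\times\mathbb{R}$; if $\delta^k<\delta$ and $N=n$, stop; otherwise set $Y^k=\sum_{j=1}^N\alpha^k_j\nabla f_{i_j}(u^k)$, $y^k=Y^k/\|Y^k\|$, take the step length $\tau^k\ge0$ to be a maximizer (computed by golden section search) of $\kappa(\tau)=\lambda(u^k+\tau y^k)$ over $\tau\ge0$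 with $u^k+\tau y^k\in S$, and set $u^{k+1}=u^k+\tau^ky^k$. *)

theory Defs
  imports "HOL-Analysis.Analysis"
begin

text \<open>Vectors of R^n are rendered as real^'n (n = CARD('n)); indices i range over the finite type 'n.\<close>

definition grad :: "(real^'n \<Rightarrow> real) \<Rightarrow> real^'n \<Rightarrow> real^'n" where
  "grad \<phi> u = (\<chi> j. frechet_derivative \<phi> (at u) (axis j 1))"

definition fq :: "(real^'n \<Rightarrow> real^'n) \<Rightarrow> (real^'n \<Rightarrow> real^'n) \<Rightarrow> 'n \<Rightarrow> real^'n \<Rightarrow> real" where
  "fq T G i u = T u $ i / G u $ i"

definition lam :: "(real^'n \<Rightarrow> real^'n) \<Rightarrow> (real^'n \<Rightarrow> real^'n) \<Rightarrow> real^'n \<Rightarrow> real" where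
  "lam T G u = Min (range (\<lambda>i. fq T G i u))"

definition Neps :: "(real^'n \<Rightarrow> real^'n) \<Rightarrow> (real^'n \<Rightarrow> real^'n) \<Rightarrow> real \<Rightarrow> real^'n \<Rightarrow> 'n set" where
  "Neps T G \<epsilon> u = {i. fq T G i u - lam T G u < \<epsilon>}"

text \<open>Gram matrix Gamma_M(u) = A_M(u)^T A_M(u), with rows/columns indexed by the elements of M
  (in increasing order in the paper; the ordering is immaterial here).\<close>
definition Gam :: "(real^'n \<Rightarrow> real^'n) \<Rightarrow> (real^'n \<Rightarrow> real^'n) \<Rightarrow> 'n set \<Rightarrow> real^'n \<Rightarrow> 'n \<Rightarrow> 'n \<Rightarrow> real" where
  "Gam T G M u i j = grad (fq T G i) u \<bullet> grad (fq T G j) u"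

definition solves_system :: "(real^'n \<Rightarrow> real^'n) \<Rightarrow> (real^'n \<Rightarrow> real^'n) \<Rightarrow> 'n set \<Rightarrow> real^'n
    \<Rightarrow> ('n \<Rightarrow> real) \<Rightarrow> real \<Rightarrow> bool" where
  "solves_system T G M u \<alpha> d \<longleftrightarrow>
     (\<forall>i\<in>M. (\<Sum>j\<in>M. Gam T G M u i j * \<alpha> j) = d) \<and> (\<Sum>j\<in>M. \<alpha> j) = 1"

end

theory Submission
  imports Defs
begin

lemma lin_grad:
  fixes f :: "real^'n \<Rightarrow> real"
  assumes "f differentiable at x"
  shows "frechet_derivative f (at x) h = grad f x \<bullet> h"
proof -
  have lin: "linear (frechet_derivative f (at x))"
    using assms frechet_derivative_works has_derivative_linear by blast
  have "frechet_derivative f (at x) h = frechet_derivative f (at x) (\<Sum>i\<in>UNIV. h $ i *\<^sub>R axis i 1)"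
    using basis_expansion[of h] by (simp add: scalar_mult_eq_scaleR)
  also have "\<dots> = (\<Sum>i\<in>UNIV. h $ i * frechet_derivative f (at x) (axis i 1))"
    using lin by (simp add: linear_sum linear_scale)
  also have "\<dots> = grad f x \<bullet> h"
    by (simp add: grad_def inner_vec_def mult.commute)
  finally show ?thesis .
qed

lemma dir:
  fixes f :: "real^'n \<Rightarrow> real"
  assumes "f differentiable at x"
  shows "((\<lambda>t. f (x + t *\<^sub>R y)) has_real_derivative (grad f x \<bullet> y)) (at 0)"
proof -
  have d: "(f has_derivative frechet_derivative f (at x)) (at x)"
    using assms frechet_derivative_works by blast
  have lin: "linear (frechet_derivative f (at x))"
    using d has_derivative_linear by blast
  have l: "((\<lambda>t::real. x + t *\<^sub>R y) has_derivative (\<lambda>t. t *\<^sub>R y)) (at 0)"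
    by (auto intro!: derivative_eq_intros)
  have d0: "(f has_derivative frechet_derivative f (at x)) (at (x + 0 *\<^sub>R y))"
    using d by simp
  have "((\<lambda>t. f (x + t *\<^sub>R y)) has_derivative (\<lambda>t. frechet_derivative f (at x) (t *\<^sub>R y))) (at 0)"
    using diff_chain_at[OF l d0] by (simp add: o_def)
  moreover have "(\<lambda>t. frechet_derivative f (at x) (t *\<^sub>R y)) = (*) (grad f x \<bullet> y)"
    using lin lin_grad[OF assms] by (auto simp: linear_scale)
  ultimately show ?thesis by (simp add: has_field_derivative_def)
qed

lemma fq_diff:
  fixes T G :: "real^'n \<Rightarrow> real^'n"
  assumes "T differentiable at x" "G differentiable at x" "G x $ i \<noteq> 0"
  shows "fq T G i differentiable at x"
proof -
  have bl: "bounded_linear (\<lambda>v::real^'n. v $ i)" by (rule bounded_linear_vec_nth)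
  have "(\<lambda>v. T v $ i) differentiable at x"
    using differentiable_chain_at[OF assms(1)] bounded_linear_imp_differentiable[OF bl]
    by (simp add: o_def) blast
  moreover have "(\<lambda>v. G v $ i) differentiable at x"
    using differentiable_chain_at[OF assms(2)] bounded_linear_imp_differentiable[OF bl]
    by (simp add: o_def) blast
  ultimately show ?thesis unfolding fq_def[abs_def]
    using differentiable_divide assms(3) by blast
qed
theorem proposition3:
  fixes T G :: "real^'n \<Rightarrow> real^'n"
    and T' G' :: "real^'n \<Rightarrow> ((real^'n) \<Rightarrow>\<^sub>L (real^'n))"
    and S :: "(real^'n) set"
    and \<epsilon> \<delta> :: real
    and u :: "nat \<Rightarrow> real^'n"
    and \<alpha> :: "nat \<Rightarrow> 'n \<Rightarrow> real"
    and d :: "nat \<Rightarrow> real"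
    and \<tau> :: "nat \<Rightarrow> real"
    and k :: nat
  assumes T_C1: "\<And>x. (T has_derivative blinfun_apply (T' x)) (at x)" "continuous_on UNIV T'"
    and G_C1: "\<And>x. (G has_derivative blinfun_apply (G' x)) (at x)" "continuous_on UNIV G'"
    and S_open: "open S"
    and G_pos: "\<And>v \<psi>. v \<in> S \<Longrightarrow> (\<forall>i. \<psi> $ i \<ge> 0) \<Longrightarrow> \<psi> \<noteq> 0 \<Longrightarrow> G v \<bullet> \<psi> > 0"
    and params: "\<epsilon> > 0" "\<delta> > 0"
    and start: "u 0 \<in> S"
    and system: "\<And>m. m \<le> k \<Longrightarrow> solves_system T G (Neps T G \<epsilon> (u m)) (u m) (\<alpha> m) (d m)"
    and no_stop: "\<And>m. m \<le> k \<Longrightarrow> \<not> (d m < \<delta> \<and> card (Neps T G \<epsilon> (u m)) = CARD('n))"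
    and step: "\<And>m. m \<le> k \<Longrightarrow>
       (let Y = (\<Sum>j\<in>Neps T G \<epsilon> (u m). \<alpha> m j *\<^sub>R grad (fq T G j) (u m));
            y = Y /\<^sub>R norm Y
        in \<tau> m \<ge> 0 \<and> u m + \<tau> m *\<^sub>R y \<in> S
           \<and> (\<forall>t\<ge>0. u m + t *\<^sub>R y \<in> S \<longrightarrow> lam T G (u m + t *\<^sub>R y) \<le> lam T G (u m + \<tau> m *\<^sub>R y))
           \<and> u (Suc m) = u m + \<tau> m *\<^sub>R y)"
    and pos: "d k > 0"
  shows "lam T G (u (Suc k)) > lam T G (u k)"
proof -
  have inS: "u m \<in> S" if "m \<le> k" for m
    using that
  proof (induction m)
    case 0 then show ?case using start by simp
  next
    case (Suc m)
    then show ?case using step[of m] by (simp add: Let_def)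
  qed
  define x where "x = u k"
  define N where "N = Neps T G \<epsilon> x"
  define Y where "Y = (\<Sum>j\<in>N. \<alpha> k j *\<^sub>R grad (fq T G j) x)"
  define y where "y = Y /\<^sub>R norm Y"
  have xS: "x \<in> S" using inS[of k] x_def by simp
  have st: "\<tau> k \<ge> 0 \<and> x + \<tau> k *\<^sub>R y \<in> S
           \<and> (\<forall>t\<ge>0. x + t *\<^sub>R y \<in> S \<longrightarrow> lam T G (x + t *\<^sub>R y) \<le> lam T G (x + \<tau> k *\<^sub>R y))
           \<and> u (Suc k) = x + \<tau> k *\<^sub>R y"
    using step[of k] unfolding x_def N_def Y_def y_def by (simp add: Let_def)
  have sys: "\<forall>i\<in>N. (\<Sum>j\<in>N. Gam T G N x i j * \<alpha> k j) = d k" "(\<Sum>j\<in>N. \<alpha> k j) = 1"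
    using system[of k] unfolding solves_system_def x_def N_def by auto
  have Gpos: "G x $ i > 0" for i
  proof -
    have "(\<forall>j. axis i (1::real) $ j \<ge> 0)" by (simp add: axis_def)
    moreover have "axis i (1::real) \<noteq> 0" by (simp add: axis_eq_0_iff)
    ultimately have "G x \<bullet> axis i 1 > 0" using G_pos[OF xS] by blast
    then show ?thesis by (simp add: inner_axis)
  qed
  have Tdiff: "T differentiable at x" using T_C1(1) differentiable_def by blast
  have Gdiff: "G differentiable at x" using G_C1(1) differentiable_def by blast
  have fdiff: "fq T G i differentiable at x" for i
    using fq_diff[OF Tdiff Gdiff] Gpos[of i] by simp
  have gY: "grad (fq T G i) x \<bullet> Y = d k" if "i \<in> N" for i
  proof -
    have "grad (fq T G i) x \<bullet> Y = (\<Sum>j\<in>N. Gam T G N x i j * \<alpha> k j)"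
      unfolding Y_def Gam_def by (simp add: inner_sum_right mult.commute)
    then show ?thesis using sys(1) that by simp
  qed
  have YY: "Y \<bullet> Y = d k"
  proof -
    have "Y \<bullet> Y = (\<Sum>j\<in>N. \<alpha> k j * (grad (fq T G j) x \<bullet> Y))"
      unfolding Y_def[of] by (simp add: inner_sum_left)
    also have "\<dots> = (\<Sum>j\<in>N. \<alpha> k j * d k)"
      using gY by (intro sum.cong) auto
    also have "\<dots> = d k" using sys(2) by (simp add: sum_distrib_right[symmetric])
    finally show ?thesis .
  qed
  have nY: "norm Y > 0" using YY pos by (metis inner_zero_left less_irrefl zero_less_norm_iff)
  have gy: "grad (fq T G i) x \<bullet> y > 0" if "i \<in> N" for i
    using gY[OF that] nY pos unfolding y_def by (simp add: inner_scaleR_right)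
  have fin: "finite (range (\<lambda>i. fq T G i v))" for v :: "real^'n" by simp
  have lam_le: "lam T G v \<le> fq T G i v" for v i
    unfolding lam_def using fin by (intro Min_le) auto
  have ev: "\<forall>\<^sub>F t in at_right 0. fq T G i (x + t *\<^sub>R y) > lam T G x" for i
  proof (cases "i \<in> N")
    case True
    obtain e where e: "e > 0" "\<forall>h>0. h < e \<longrightarrow> fq T G i (x + 0 *\<^sub>R y) < fq T G i (x + (0 + h) *\<^sub>R y)"
      using DERIV_pos_inc_right[OF dir[OF fdiff[of i]] gy[OF True]] by blast
    then have "\<forall>\<^sub>F t in at_right 0. fq T G i x < fq T G i (x + t *\<^sub>R y)"
      unfolding eventually_at_right_field by auto
    then show ?thesis
      by eventually_elim (use lam_le[of x i] in linarith)
  next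
    case False
    then have gt: "fq T G i x > lam T G x"
      using params(1) unfolding N_def Neps_def by auto
    have "isCont (\<lambda>t. fq T G i (x + t *\<^sub>R y)) 0"
      using DERIV_isCont[OF dir[OF fdiff[of i]]] .
    then have "((\<lambda>t. fq T G i (x + t *\<^sub>R y)) \<longlongrightarrow> fq T G i x) (at_right 0)"
      unfolding isCont_def by (auto intro: tendsto_mono at_le)
    from order_tendstoD(1)[OF this gt] show ?thesis .
  qed
  have evall: "\<forall>\<^sub>F t in at_right 0. \<forall>i. fq T G i (x + t *\<^sub>R y) > lam T G x"
    using ev by (simp add: eventually_all_finite)
  have tl: "((\<lambda>t::real. x + t *\<^sub>R y) \<longlongrightarrow> x) (at_right 0)"
    by (auto intro!: tendsto_eq_intros)
  have evS: "\<forall>\<^sub>F t in at_right 0. x + t *\<^sub>R y \<in> S"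
    using topological_tendstoD[OF tl S_open xS] .
  have "\<forall>\<^sub>F t::real in at_right 0. t > 0 \<and> x + t *\<^sub>R y \<in> S \<and> (\<forall>i. fq T G i (x + t *\<^sub>R y) > lam T G x)"
    using eventually_conj[OF eventually_at_right_less[of "0::real"] eventually_conj[OF evS evall]] by simp
  then obtain t where t: "t > 0" "x + t *\<^sub>R y \<in> S" "\<forall>i. fq T G i (x + t *\<^sub>R y) > lam T G x"
    using eventually_happens'[OF trivial_limit_at_right_real] by blast
  have "lam T G x < lam T G (x + t *\<^sub>R y)"
    unfolding lam_def[of T G "x + t *\<^sub>R y"] using fin t(3) by (subst Min_gr_iff) auto
  also have "\<dots> \<le> lam T G (u (Suc k))" using st t by auto
  finally show ?thesis by (simp add: x_def)
qed

end
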